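(* Let $n\in\mathbb{N}=\{1,2,\dots\}$, $0\le i\le n-1$ and $\alpha,\beta>-1$. Let $t_1<\dots<t_n$ be the zeros of $P_n^{(\alpha,\beta)}$, and let $n_0\in\{0,1,\dots,n\}$ be such that $0\in[t_{n_0},t_{n_0+1})$, with the conventions $t_0=-1$, $t_{n+1}=1$. Write $$A_m:=\sum_{k=0}^i\frac{2^{k+2}\Gamma(n+\alpha+\beta+1)}{\Gamma(n+k+\alpha+\beta+2)}\frac{t_m^{i-k}}{(i-k)!}p_{n-1-k}^{(\alpha+1+k,\beta+1+k)}(t_m).$$ (i) If $i$ is even, then $$\int_{-1}^1\frac{|t|^i}{i!}|p_n^{(\alpha,\beta)}(t)|\,dt=\sum_{m=1}^n(-1)^{m+n}A_m.$$ (ii) If $i$ is odd, then $$\int_{-1}^1\frac{|t|^i}{i!}|p_n^{(\alpha,\beta)}(t)|\,dt=\sum_{m=1}^{n_0}(-1)^{m+n+1}A_m+(-1)^{n_0+n}\frac{2^{i+2}\Gamma(n+\alpha+\beta+1)}{\Gamma(n+i+\alpha+\beta+2)}p_{n-1-i}^{(\alpha+1+i,\beta+1+i)}(0)+\sum_{m=n_0+1}^n(-1)^{m+n}A_m.$$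
   Context: The Jacobi polynomials are $P_n^{(\alpha,\beta)}(t)=\sum_{j=0}^n\frac{1}{2^n}\binom{n+\alpha}{n-j}\binom{n+\beta}{j}(t-1)^j(t+1)^{n-j}$; for $\alpha,\beta>-1$ their zeros are real, simple and lie in $(-1,1)$. The Jacobi functions on $(-1,1)$ are $p_n^{(\alpha,\beta)}(t)=\frac{(2n+\alpha+\beta+1)\Gamma(n+\alpha+\beta+1)\,n!}{2^{\alpha+\beta+1}\Gamma(n+\alpha+1)\Gamma(n+\beta+1)}(1-t)^{\alpha}(1+t)^{\beta}P_n^{(\alpha,\beta)}(t)$. *)

theory Defs
  imports "HOL-Analysis.Analysis"
begin

definition jacobiP :: "nat \<Rightarrow> real \<Rightarrow> real \<Rightarrow> real \<Rightarrow> real" where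
  "jacobiP n a b t =
     (\<Sum>j=0..n. (1 / 2 ^ n) * ((real n + a) gchoose (n - j)) * ((real n + b) gchoose j)
        * (t - 1) ^ j * (t + 1) ^ (n - j))"

definition jacobi_fun :: "nat \<Rightarrow> real \<Rightarrow> real \<Rightarrow> real \<Rightarrow> real" where
  "jacobi_fun n a b t =
     ((2 * real n + a + b + 1) * Gamma (real n + a + b + 1) * fact n
       / (2 powr (a + b + 1) * Gamma (real n + a + 1) * Gamma (real n + b + 1)))
     * (1 - t) powr a * (1 + t) powr b * jacobiP n a b t"

text \<open>The quantity A_m of the statement, evaluated at the point x = t_m.\<close>
definition jacA :: "nat \<Rightarrow> nat \<Rightarrow> real \<Rightarrow> real \<Rightarrow> real \<Rightarrow> real" where
  "jacA n i a b x =
     (\<Sum>k=0..i. (2 ^ (k + 2) * Gamma (real n + a + b + 1) / Gamma (real n + real k + a + b + 2))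
        * (x ^ (i - k) / fact (i - k))
        * jacobi_fun (n - 1 - k) (a + 1 + real k) (b + 1 + real k) x)"

end

theory Submission
  imports Defs
begin

lemma gch_pos: "(x::real) > real k - 1 \<Longrightarrow> x gchoose k > 0"
  by (simp add: gbinomial_pochhammer' pochhammer_pos)
lemma gch_step: "((x::real) - real k) * (x gchoose k) = real (Suc k) * (x gchoose Suc k)"
  using gbinomial_mult_1[of x k] by (simp add: algebra_simps)
lemma V_deriv: "-1<x \<Longrightarrow> x<1 \<Longrightarrow> ((\<lambda>t. (1-t) powr p * (1+t) powr q) has_real_derivative
   (-p*(1-x) powr (p-1)*(1+x) powr q + q*(1-x) powr p * (1+x) powr (q-1))) (at x)"
  by (auto intro!: derivative_eq_intros simp: algebra_simps)

definition Vf :: "nat \<Rightarrow> real \<Rightarrow> real \<Rightarrow> nat \<Rightarrow> real \<Rightarrow> real" where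
  "Vf m p q j t = (1-t) powr (p + real j) * (1+t) powr (q + real (m-j))"
definition cf :: "nat \<Rightarrow> real \<Rightarrow> real \<Rightarrow> nat \<Rightarrow> real" where
  "cf m p q j = (1/2^m) * ((real m + p) gchoose (m-j)) * ((real m + q) gchoose j) * (-1)^j"

lemma W_repr:
  assumes "-1<t" "t<1"
  shows "(1-t) powr p * (1+t) powr q * jacobiP m p q t = (\<Sum>j=0..m. cf m p q j * Vf m p q j t)"
  unfolding jacobiP_def sum_distrib_left
proof (rule sum.cong[OF refl])
  fix j assume j: "j \<in> {0..m}"
  have a: "(1-t) powr (p + real j) = (1-t) powr p * (1-t)^j"
    using assms by (simp add: powr_add powr_realpow)
  have b: "(1+t) powr (q + real (m-j)) = (1+t) powr q * (1+t)^(m-j)"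
    using assms by (simp add: powr_add powr_realpow)
  have c: "(t-1)^j = (-1)^j * (1-t)^j"
    by (metis minus_diff_eq mult_minus1 power_mult_distrib)
  show "(1-t) powr p * (1+t) powr q * (1 / 2 ^ m * (real m + p gchoose (m - j)) * (real m + q gchoose j) * (t - 1) ^ j * (t + 1) ^ (m - j))
        = cf m p q j * Vf m p q j t"
    unfolding cf_def Vf_def a b c by (simp add: algebra_simps)
qed

lemma coef_id:
  fixes p q :: real and m' j :: nat
  assumes "j \<le> Suc m'"
  shows "(if j \<le> m' then - (cf m' (p+1) (q+1) j * (p + 1 + real j)) else 0)
       + (if 1 \<le> j then cf m' (p+1) (q+1) (j-1) * (q + 1 + real (m' - (j-1))) else 0)
       = -2 * real (Suc m') * cf (Suc m') p q j"
proof -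
  have e1: "real m' + (p+1) = real (Suc m') + p" "real m' + (q+1) = real (Suc m') + q" by simp_all
  have h1: "((real (Suc m') + p) gchoose (m'-j)) * (p+1+real j) = real (Suc m' - j) * ((real (Suc m') + p) gchoose (Suc m' - j))"
    if "j \<le> m'"
  proof -
    have A: "real (Suc m') + p - real (m'-j) = p+1+real j" using that by (simp add: of_nat_diff)
    have B: "Suc (m'-j) = Suc m' - j" using that by simp
    show ?thesis using gch_step[of "real (Suc m') + p" "m'-j"] unfolding A B by (simp add: algebra_simps)
  qed
  have h2: "((real (Suc m') + q) gchoose (j-1)) * (q+1+real (m'-(j-1))) = real j * ((real (Suc m') + q) gchoose j)"
    if "1 \<le> j"
  proof -
    have A: "real (Suc m') + q - real (j-1) = q+1+real (m'-(j-1))" using that assms by (simp add: of_nat_diff)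
    have B: "Suc (j-1) = j" using that by simp
    show ?thesis using gch_step[of "real (Suc m') + q" "j-1"] unfolding A B by (simp add: algebra_simps)
  qed
  define Ca where "Ca k = (real (Suc m') + p) gchoose k" for k
  define Cb where "Cb k = (real (Suc m') + q) gchoose k" for k
  have cf1: "cf m' (p+1) (q+1) k = (1/2^m') * (-1)^k * Ca (m'-k) * Cb k" for k
    unfolding cf_def Ca_def Cb_def by (simp add: algebra_simps)
  have cf2: "cf (Suc m') p q j = (1/2^m') * (-1)^j * Ca (Suc m'-j) * Cb j / 2"
    unfolding cf_def Ca_def Cb_def by (simp add: algebra_simps)
  have T1: "cf m' (p+1) (q+1) j * (p + 1 + real j) = (1/2^m') * (-1)^j * Cb j * (real (Suc m' - j) * Ca (Suc m' - j))"
    if "j \<le> m'"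
  proof -
    have "cf m' (p+1) (q+1) j * (p + 1 + real j) = (1/2^m') * (-1)^j * Cb j * (Ca (m'-j) * (p+1+real j))"
      unfolding cf1 by (simp add: algebra_simps add_divide_distrib)
    also have "\<dots> = (1/2^m') * (-1)^j * Cb j * (real (Suc m' - j) * Ca (Suc m' - j))"
      using h1[OF that, folded Ca_def] by (simp only:)
    finally show ?thesis .
  qed
  have T2: "cf m' (p+1) (q+1) (j-1) * (q + 1 + real (m' - (j-1))) = - ((1/2^m') * (-1)^j * Ca (Suc m' - j) * (real j * Cb j))"
    if "1 \<le> j"
  proof -
    have s: "(-1::real)^(j-1) = - ((-1)^j)" using that
      by (cases j) auto
    have mj: "m' - (j-1) = Suc m' - j" using that assms by simp
    have "cf m' (p+1) (q+1) (j-1) * (q + 1 + real (m' - (j-1))) = (1/2^m') * (-1)^(j-1) * Ca (m' - (j-1)) * (Cb (j-1) * (q + 1 + real (m' - (j-1))))"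
      unfolding cf1 by (simp add: algebra_simps add_divide_distrib)
    also have "\<dots> = (1/2^m') * (-1)^(j-1) * Ca (Suc m' - j) * (real j * Cb j)"
      using h2[OF that, folded Cb_def] unfolding mj by (simp only:)
    finally show ?thesis unfolding s by simp
  qed
  show ?thesis
  proof (cases "j = 0")
    case True
    have a: "cf m' (p+1) (q+1) 0 * (p+1) = (1/2^m') * Cb 0 * (real (Suc m') * Ca (Suc m'))" using T1 True by simp
    have b: "cf (Suc m') p q 0 = (1/2^m') * Ca (Suc m') * Cb 0 / 2" using cf2 True by simp
    have "(if j \<le> m' then - (cf m' (p+1) (q+1) j * (p + 1 + real j)) else 0)
       + (if 1 \<le> j then cf m' (p+1) (q+1) (j-1) * (q + 1 + real (m' - (j-1))) else 0)
       = - (cf m' (p+1) (q+1) 0 * (p+1))" using True by simp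
    also have "\<dots> = -2 * real (Suc m') * cf (Suc m') p q 0" unfolding a b by (simp add: field_simps)
    finally show ?thesis using True by simp
  next
    case False
    then have j1: "1 \<le> j" by simp
    show ?thesis
    proof (cases "j \<le> m'")
      case True
      have r: "real (Suc m' - j) = real (Suc m') - real j" using True by (simp add: of_nat_diff)
      have "(if j \<le> m' then - (cf m' (p+1) (q+1) j * (p + 1 + real j)) else 0)
       + (if 1 \<le> j then cf m' (p+1) (q+1) (j-1) * (q + 1 + real (m' - (j-1))) else 0)
       = - (cf m' (p+1) (q+1) j * (p + 1 + real j)) + cf m' (p+1) (q+1) (j-1) * (q + 1 + real (m' - (j-1)))"
        using True j1 by simp
      also have "\<dots> = - ((1/2^m') * (-1)^j * Cb j * (real (Suc m' - j) * Ca (Suc m' - j)))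
          + - ((1/2^m') * (-1)^j * Ca (Suc m' - j) * (real j * Cb j))"
        by (simp only: T1[OF True] T2[OF j1])
      also have "\<dots> = -2 * real (Suc m') * cf (Suc m') p q j"
        unfolding cf2 r by (simp add: field_simps)
      finally show ?thesis .
    next
      case False
      then have jm: "j = Suc m'" using assms by simp
      have "(if j \<le> m' then - (cf m' (p+1) (q+1) j * (p + 1 + real j)) else 0)
       + (if 1 \<le> j then cf m' (p+1) (q+1) (j-1) * (q + 1 + real (m' - (j-1))) else 0)
       = cf m' (p+1) (q+1) (j-1) * (q + 1 + real (m' - (j-1)))"
        using False j1 by simp
      also have "\<dots> = - ((1/2^m') * (-1)^j * Ca (Suc m' - j) * (real j * Cb j))"
        by (simp only: T2[OF j1])
      also have "\<dots> = -2 * real (Suc m') * cf (Suc m') p q j"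
        unfolding cf2 by (simp add: jm field_simps)
      finally show ?thesis .
    qed
  qed
qed

lemma Vf_deriv:
  assumes "-1<x" "x<1" "j \<le> m'"
  shows "(Vf m' (p+1) (q+1) j has_real_derivative
     (-(p+1+real j)) * Vf (Suc m') p q j x + (q + 1 + real (m'-j)) * Vf (Suc m') p q (Suc j) x) (at x)"
proof -
  have "Vf m' (p+1) (q+1) j = (\<lambda>t. (1-t) powr (p+1+real j) * (1+t) powr (q+1+real (m'-j)))"
    unfolding Vf_def by (simp add: algebra_simps)
  moreover have "(-(p+1+real j)*(1-x) powr (p+1+real j-1)*(1+x) powr (q+1+real (m'-j)) + (q+1+real (m'-j))*(1-x) powr (p+1+real j) * (1+x) powr (q+1+real (m'-j)-1))
     = (-(p+1+real j)) * Vf (Suc m') p q j x + (q + 1 + real (m'-j)) * Vf (Suc m') p q (Suc j) x"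
  proof -
    have a: "p+1+real j-1 = p + real j" by simp
    have b: "q+1+real (m'-j) = q + real (Suc m' - j)" using assms(3) by (simp add: of_nat_diff)
    have c: "q+1+real (m'-j)-1 = q + real (Suc m' - Suc j)" using assms(3) by (simp add: of_nat_diff)
    have d: "p+1+real j = p + real (Suc j)" by simp
    show ?thesis unfolding Vf_def a c by (simp only: b[symmetric] d[symmetric])
  qed
  ultimately show ?thesis using V_deriv[OF assms(1,2), of "p+1+real j" "q+1+real (m'-j)"]
    by simp
qed

lemma W_deriv:
  assumes "-1<x" "x<1"
  shows "((\<lambda>t. (1-t) powr (p+1) * (1+t) powr (q+1) * jacobiP m' (p+1) (q+1) t) has_real_derivative
     (-2 * real (Suc m')) * ((1-x) powr p * (1+x) powr q * jacobiP (Suc m') p q x)) (at x)"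
proof -
  define c where "c j = cf m' (p+1) (q+1) j" for j
  define V where "V j = Vf (Suc m') p q j x" for j
  have d: "((\<lambda>t. \<Sum>j=0..m'. c j * Vf m' (p+1) (q+1) j t) has_real_derivative
     (\<Sum>j=0..m'. c j * ((-(p+1+real j)) * V j + (q + 1 + real (m'-j)) * V (Suc j)))) (at x)"
    unfolding V_def
    by (intro DERIV_sum DERIV_cmult Vf_deriv assms) auto
  have s1: "(\<Sum>j=0..m'. c j * (-(p+1+real j)) * V j) = (\<Sum>j=0..Suc m'. (if j \<le> m' then - (c j * (p + 1 + real j)) else 0) * V j)"
    apply (simp add: sum.atLeast0_atMost_Suc)
    by (intro sum.cong refl) (simp add: algebra_simps)
  have s2: "(\<Sum>j=0..m'. c j * (q + 1 + real (m'-j)) * V (Suc j)) = (\<Sum>j=0..Suc m'. (if 1 \<le> j then c (j-1) * (q + 1 + real (m' - (j-1))) else 0) * V j)"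
    unfolding sum.atLeast0_atMost_Suc_shift by simp
  have "(\<Sum>j=0..m'. c j * ((-(p+1+real j)) * V j + (q + 1 + real (m'-j)) * V (Suc j)))
      = (\<Sum>j=0..m'. c j * (-(p+1+real j)) * V j) + (\<Sum>j=0..m'. c j * (q + 1 + real (m'-j)) * V (Suc j))"
    unfolding sum.distrib[symmetric] by (intro sum.cong refl) (simp add: algebra_simps)
  also have "\<dots> = (\<Sum>j=0..Suc m'. ((if j \<le> m' then - (c j * (p + 1 + real j)) else 0) + (if 1 \<le> j then c (j-1) * (q + 1 + real (m' - (j-1))) else 0)) * V j)"
    unfolding s1 s2 sum.distrib[symmetric] by (simp add: algebra_simps)
  also have "\<dots> = (\<Sum>j=0..Suc m'. (-2 * real (Suc m') * cf (Suc m') p q j) * V j)"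
    apply (rule sum.cong[OF refl]) apply (unfold c_def) apply (subst coef_id) by auto
  also have "\<dots> = (-2 * real (Suc m')) * ((1-x) powr p * (1+x) powr q * jacobiP (Suc m') p q x)"
    unfolding W_repr[OF assms] V_def sum_distrib_left by (simp add: algebra_simps)
  finally have e: "(\<Sum>j=0..m'. c j * ((-(p+1+real j)) * V j + (q + 1 + real (m'-j)) * V (Suc j))) = (-2 * real (Suc m')) * ((1-x) powr p * (1+x) powr q * jacobiP (Suc m') p q x)" .
  show ?thesis
  proof (rule has_field_derivative_transform_within_open[OF DERIV_cong[OF d e], of "{-1<..<1}"])
    show "open {-1<..<(1::real)}" by simp
    show "x \<in> {-1<..<1}" using assms by simp
    fix t :: real assume "t \<in> {-1<..<1}"
    then show "(\<Sum>j=0..m'. c j * Vf m' (p+1) (q+1) j t) = (1-t) powr (p+1) * (1+t) powr (q+1) * jacobiP m' (p+1) (q+1) t"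
      unfolding c_def by (simp add: W_repr)
  qed
qed

lemma Gpl: "(z::real) > 0 \<Longrightarrow> Gamma (z+1) = z * Gamma z"
  using Gamma_plus1[of z] nonpos_Ints_nonpos[of z] by force

lemma jf_deriv:
  assumes "-1<x" "x<1" "p > -1" "q > -1"
  shows "(jacobi_fun m' (p+1) (q+1) has_real_derivative
     (-(real (Suc m') + p + q + 1)/2) * jacobi_fun (Suc m') p q x) (at x)"
proof -
  define M where "M = real (Suc m')"
  define K1 where "K1 = (2 * real m' + (p+1) + (q+1) + 1) * Gamma (real m' + (p+1) + (q+1) + 1) * fact m'
       / (2 powr ((p+1) + (q+1) + 1) * Gamma (real m' + (p+1) + 1) * Gamma (real m' + (q+1) + 1))"
  define K0 where "K0 = (2 * real (Suc m') + p + q + 1) * Gamma (real (Suc m') + p + q + 1) * fact (Suc m')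
       / (2 powr (p + q + 1) * Gamma (real (Suc m') + p + 1) * Gamma (real (Suc m') + q + 1))"
  have j1: "jacobi_fun m' (p+1) (q+1) = (\<lambda>t. K1 * ((1-t) powr (p+1) * (1+t) powr (q+1) * jacobiP m' (p+1) (q+1) t))"
    by (rule ext) (simp add: jacobi_fun_def K1_def mult_ac)
  have j0: "jacobi_fun (Suc m') p q x = K0 * ((1-x) powr p * (1+x) powr q * jacobiP (Suc m') p q x)"
    by (simp add: jacobi_fun_def K0_def mult_ac)
  have g1: "Gamma (real m' + (p+1) + (q+1) + 1) = (M + p + q + 1) * Gamma (M + p + q + 1)"
  proof -
    have "Gamma (real m' + (p+1) + (q+1) + 1) = Gamma ((M + p + q + 1) + 1)" unfolding M_def by (simp add: algebra_simps)
    also have "\<dots> = (M + p + q + 1) * Gamma (M + p + q + 1)" by (rule Gpl) (use assms in \<open>simp add: M_def\<close>)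
    finally show ?thesis .
  qed
  have g2: "Gamma (real m' + (p+1) + 1) = Gamma (M + p + 1)" "Gamma (real m' + (q+1) + 1) = Gamma (M + q + 1)"
    unfolding M_def by (simp_all add: algebra_simps)
  have pw: "2 powr ((p+1) + (q+1) + 1) = 4 * 2 powr (p+q+1)"
  proof -
    have e: "(p+1)+(q+1)+1 = (p+q+1) + 2" by simp
    show ?thesis unfolding e powr_add by (simp add: powr_numeral)
  qed
  have fa: "fact (Suc m') = M * fact m'" unfolding M_def by simp
  have pos: "Gamma (M + p + 1) > 0" "Gamma (M + q + 1) > 0" "Gamma (M + p + q + 1) > 0" "M > 0"
    using assms unfolding M_def by auto
  have rm: "real m' = M - 1" unfolding M_def by simp
  have K: "K1 * (-2 * M) = (-(M + p + q + 1)/2) * K0"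
    unfolding K1_def K0_def g1 g2 pw fa unfolding M_def[symmetric] rm using pos
    by (simp add: field_simps)
  define W0 where "W0 = (1-x) powr p * (1+x) powr q * jacobiP (Suc m') p q x"
  have E: "K1 * ((-2 * real (Suc m')) * W0) = (-(real (Suc m') + p + q + 1)/2) * (K0 * W0)"
  proof -
    have "K1 * ((-2 * real (Suc m')) * W0) = (K1 * (-2 * M)) * W0" by (simp add: M_def)
    also have "\<dots> = ((-(M + p + q + 1)/2) * K0) * W0" by (simp only: K)
    finally show ?thesis by (simp add: M_def)
  qed
  show ?thesis
    unfolding j1 j0 W0_def[symmetric]
    using DERIV_cong[OF DERIV_cmult[OF W_deriv[OF assms(1,2), of p q m'], of K1], folded W0_def, OF E] .
qed

definition Phi :: "nat \<Rightarrow> real \<Rightarrow> real \<Rightarrow> nat \<Rightarrow> real \<Rightarrow> real" where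
  "Phi n a b k x = (2^(k+1) * Gamma (real n + a + b + 1) / Gamma (real n + real k + a + b + 2))
      * jacobi_fun (n-1-k) (a+1+real k) (b+1+real k) x"

lemma Phi_deriv:
  assumes "-1<x" "x<1" "a > -1" "b > -1" "Suc k < n"
  shows "(Phi n a b (Suc k) has_real_derivative - Phi n a b k x) (at x)"
proof -
  define m' where "m' = n - 1 - Suc k"
  have e1: "n - 1 - Suc k = m'" "n - 1 - k = Suc m'" using assms(5) unfolding m'_def by auto
  have e2: "a + 1 + real (Suc k) = (a+1+real k) + 1" "b + 1 + real (Suc k) = (b+1+real k) + 1" by simp_all
  have d: "(jacobi_fun m' ((a+1+real k) + 1) ((b+1+real k) + 1) has_real_derivative
     (-(real (Suc m') + (a+1+real k) + (b+1+real k) + 1)/2) * jacobi_fun (Suc m') (a+1+real k) (b+1+real k) x) (at x)"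
    by (rule jf_deriv) (use assms in auto)
  have rs: "real (Suc m') = real n - 1 - real k" using assms(5) unfolding m'_def by (simp add: of_nat_diff)
  define G where "G = Gamma (real n + real k + a + b + 2)"
  have Gs: "Gamma (real n + real (Suc k) + a + b + 2) = (real n + real k + a + b + 2) * G"
  proof -
    have "Gamma (real n + real (Suc k) + a + b + 2) = Gamma ((real n + real k + a + b + 2) + 1)" by (simp add: algebra_simps)
    also have "\<dots> = (real n + real k + a + b + 2) * G" unfolding G_def by (rule Gpl) (use assms in auto)
    finally show ?thesis .
  qed
  have Gpos: "G > 0" unfolding G_def using assms by auto
  have c: "(2^(Suc k+1) * Gamma (real n + a + b + 1) / Gamma (real n + real (Suc k) + a + b + 2))
      * ((-(real (Suc m') + (a+1+real k) + (b+1+real k) + 1)/2))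
      = - (2^(k+1) * Gamma (real n + a + b + 1) / Gamma (real n + real k + a + b + 2))"
  proof -
    have z: "real (Suc m') + (a+1+real k) + (b+1+real k) + 1 = real n + real k + a + b + 2" using rs by simp
    define z where "z = real n + real k + a + b + 2"
    have zp: "z > 0" unfolding z_def using assms by simp
    show ?thesis unfolding Gs z unfolding G_def[symmetric] unfolding z_def[symmetric] using Gpos zp by (simp add: field_simps)
  qed
  define C1 where "C1 = 2^(Suc k+1) * Gamma (real n + a + b + 1) / Gamma (real n + real (Suc k) + a + b + 2)"
  define C0 where "C0 = 2^(k+1) * Gamma (real n + a + b + 1) / Gamma (real n + real k + a + b + 2)"
  define J where "J = jacobi_fun (Suc m') (a+1+real k) (b+1+real k) x"
  have f: "Phi n a b (Suc k) = (\<lambda>x. C1 * jacobi_fun m' ((a+1+real k) + 1) ((b+1+real k) + 1) x)"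
    by (rule ext) (simp only: Phi_def e1 e2 C1_def)
  have v: "C1 * ((-(real (Suc m') + (a+1+real k) + (b+1+real k) + 1)/2) * J) = - (C0 * J)"
  proof -
    have "C1 * ((-(real (Suc m') + (a+1+real k) + (b+1+real k) + 1)/2) * J) = (C1 * (-(real (Suc m') + (a+1+real k) + (b+1+real k) + 1)/2)) * J"
      by (rule mult.assoc[symmetric])
    also have "\<dots> = - (C0 * J)" unfolding C1_def C0_def c by simp
    finally show ?thesis .
  qed
  have "- Phi n a b k x = - (C0 * J)" unfolding Phi_def C0_def J_def e1 ..
  then show ?thesis
    unfolding f using DERIV_cong[OF DERIV_cmult[OF d, of C1], folded J_def, OF v] by simp
qed

lemma Phi0_deriv:
  assumes "-1<x" "x<1" "a > -1" "b > -1" "1 \<le> n"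
  shows "(Phi n a b 0 has_real_derivative - jacobi_fun n a b x) (at x)"
proof -
  define m' where "m' = n - 1"
  have e1: "n - 1 - 0 = m'" "n = Suc m'" using assms(5) unfolding m'_def by auto
  have d: "(jacobi_fun m' (a + 1) (b + 1) has_real_derivative
     (-(real (Suc m') + a + b + 1)/2) * jacobi_fun (Suc m') a b x) (at x)"
    by (rule jf_deriv) (use assms in auto)
  have Gs: "Gamma (real n + a + b + 2) = (real n + a + b + 1) * Gamma (real n + a + b + 1)"
  proof -
    have "Gamma (real n + a + b + 2) = Gamma ((real n + a + b + 1) + 1)" by (simp add: algebra_simps)
    also have "\<dots> = (real n + a + b + 1) * Gamma (real n + a + b + 1)" by (rule Gpl) (use assms in auto)
    finally show ?thesis .
  qed
  have Gpos: "Gamma (real n + a + b + 1) > 0" using assms by auto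
  have c: "(2^(0+1) * Gamma (real n + a + b + 1) / Gamma (real n + real (0::nat) + a + b + 2))
      * ((-(real n + a + b + 1)/2)) = -1"
  proof -
    define z where "z = real n + a + b + 1"
    have zp: "z > 0" unfolding z_def using assms by simp
    have Gs': "Gamma (real n + real (0::nat) + a + b + 2) = z * Gamma z" using Gs unfolding z_def by simp
    have Gz: "Gamma z > 0" by (rule Gamma_real_pos[OF zp])
    then have "Gamma z \<noteq> 0" by linarith
    show ?thesis unfolding Gs' z_def[symmetric] using Gz zp \<open>Gamma z \<noteq> 0\<close> by (simp add: field_simps)
  qed
  define C1 where "C1 = 2^(0+1) * Gamma (real n + a + b + 1) / Gamma (real n + real (0::nat) + a + b + 2)"
  have f: "Phi n a b 0 = (\<lambda>x. C1 * jacobi_fun m' (a + 1) (b + 1) x)"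
    by (rule ext) (simp add: Phi_def e1 C1_def)
  define J where "J = jacobi_fun (Suc m') a b x"
  have v: "C1 * ((-(real (Suc m') + a + b + 1)/2) * J) = - J"
  proof -
    have "C1 * ((-(real (Suc m') + a + b + 1)/2) * J) = (C1 * (-(real n + a + b + 1)/2)) * J"
      unfolding e1 by (rule mult.assoc[symmetric])
    also have "\<dots> = - J" unfolding C1_def c by simp
    finally show ?thesis .
  qed
  have "- jacobi_fun n a b x = - J" unfolding J_def e1(2) ..
  then show ?thesis
    unfolding f using DERIV_cong[OF DERIV_cmult[OF d, of C1], folded J_def, OF v] by simp
qed

definition Sf :: "nat \<Rightarrow> real \<Rightarrow> real \<Rightarrow> nat \<Rightarrow> real \<Rightarrow> real" where
  "Sf n a b j x = (\<Sum>k=0..j. x^(j-k)/fact(j-k) * Phi n a b k x)"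

lemma Sf_deriv:
  assumes "-1<x" "x<1" "a > -1" "b > -1" "j < n"
  shows "(Sf n a b j has_real_derivative - (x^j/fact j * jacobi_fun n a b x)) (at x)"
proof -
  define P' where "P' k = (if k = 0 then - jacobi_fun n a b x else - Phi n a b (k-1) x)" for k
  have dP: "(Phi n a b k has_real_derivative P' k) (at x)" if "k \<le> j" for k
  proof (cases k)
    case 0
    then show ?thesis unfolding P'_def using Phi0_deriv[OF assms(1-4)] assms(5) by simp
  next
    case (Suc k')
    then show ?thesis unfolding P'_def using Phi_deriv[OF assms(1-4), of k'] assms(5) that by simp
  qed
  have dm: "((\<lambda>x. x^l/fact l) has_real_derivative (real l * x^(l-1)/fact l)) (at x)" for l
    using DERIV_cdivide[OF DERIV_pow[of l x], of "fact l"] by simp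
  have d: "(Sf n a b j has_real_derivative
     (\<Sum>k=0..j. real (j-k) * x^(j-k-1)/fact (j-k) * Phi n a b k x + x^(j-k)/fact(j-k) * P' k)) (at x)"
  proof -
    have dt: "((\<lambda>x. x^(j-k)/fact(j-k) * Phi n a b k x) has_real_derivative
       real (j-k) * x^(j-k-1)/fact (j-k) * Phi n a b k x + x^(j-k)/fact(j-k) * P' k) (at x)" if "k \<in> {0..j}" for k
      by (rule DERIV_cong[OF DERIV_mult[OF dm dP]]) (use that in \<open>auto simp: mult.commute\<close>)
    show ?thesis unfolding Sf_def[abs_def] by (rule DERIV_sum) (rule dt)
  qed
  have e: "(\<Sum>k=0..j. real (j-k) * x^(j-k-1)/fact (j-k) * Phi n a b k x + x^(j-k)/fact(j-k) * P' k)
       = - (x^j/fact j * jacobi_fun n a b x)"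
  proof (cases j)
    case 0
    then show ?thesis unfolding P'_def by simp
  next
    case (Suc j')
    have A: "(\<Sum>k=0..Suc j'. real (Suc j'-k) * x^(Suc j'-k-1)/fact (Suc j'-k) * Phi n a b k x)
        = (\<Sum>k=0..j'. x^(j'-k)/fact (j'-k) * Phi n a b k x)"
    proof -
      have "(\<Sum>k=0..Suc j'. real (Suc j'-k) * x^(Suc j'-k-1)/fact (Suc j'-k) * Phi n a b k x)
         = (\<Sum>k=0..j'. real (Suc j'-k) * x^(Suc j'-k-1)/fact (Suc j'-k) * Phi n a b k x)"
        by (simp add: sum.atLeast0_atMost_Suc)
      also have "\<dots> = (\<Sum>k=0..j'. x^(j'-k)/fact (j'-k) * Phi n a b k x)"
      proof (rule sum.cong[OF refl])
        fix k assume "k \<in> {0..j'}"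
        then have k: "Suc j' - k = Suc (j'-k)" by auto
        show "real (Suc j'-k) * x^(Suc j'-k-1)/fact (Suc j'-k) * Phi n a b k x = x^(j'-k)/fact (j'-k) * Phi n a b k x"
          unfolding k by (simp del: of_nat_Suc add: field_simps)
      qed
      finally show ?thesis .
    qed
    have B: "(\<Sum>k=0..Suc j'. x^(Suc j'-k)/fact(Suc j'-k) * P' k)
        = - (x^(Suc j')/fact (Suc j') * jacobi_fun n a b x) - (\<Sum>k=0..j'. x^(j'-k)/fact (j'-k) * Phi n a b k x)"
      unfolding sum.atLeast0_atMost_Suc_shift by (simp add: P'_def sum_negf)
    show ?thesis unfolding Suc sum.distrib A B by simp
  qed
  show ?thesis using DERIV_cong[OF d e] .
qed

lemma jacobiP_cont: "continuous_on S (jacobiP m p q)"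
  unfolding jacobiP_def[abs_def] by (intro continuous_intros)

lemma jf_cont:
  assumes "p > 0" "q > 0"
  shows "continuous_on {-1..1} (jacobi_fun m p q)"
  unfolding jacobi_fun_def[abs_def]
  by (intro continuous_on_mult continuous_on_const continuous_on_powr' continuous_on_diff continuous_on_add continuous_on_id jacobiP_cont) (use assms in auto)

lemma jf_end:
  assumes "p > 0" "q > 0"
  shows "jacobi_fun m p q 1 = 0" "jacobi_fun m p q (-1) = 0"
  unfolding jacobi_fun_def using assms by simp_all

lemma Sf_cont:
  assumes "a > -1" "b > -1"
  shows "continuous_on {-1..1} (Sf n a b j)"
  unfolding Sf_def[abs_def] Phi_def
  by (intro continuous_on_sum continuous_on_mult continuous_on_const continuous_on_divide continuous_on_power continuous_on_id jf_cont) (use assms in auto)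

lemma Sf_end:
  assumes "a > -1" "b > -1"
  shows "Sf n a b j 1 = 0" "Sf n a b j (-1) = 0"
  unfolding Sf_def Phi_def using assms by (simp_all add: jf_end)
lemma gch_pos2:
  assumes "a > -1" "k \<le> n"
  shows "(real n + a) gchoose k > 0"
  using assms by (intro gch_pos) simp

lemma jacobiP_right:
  assumes "a > -1" "b > -1" "x \<ge> 1"
  shows "jacobiP n a b x > 0"
  unfolding jacobiP_def
proof (rule sum_pos2[of _ 0])
  show "finite {0..n}" by simp
  show "0 \<in> {0..n}" by simp
  show "0 < 1 / 2 ^ n * ((real n + a) gchoose (n - 0)) * ((real n + b) gchoose 0) * (x - 1) ^ 0 * (x + 1) ^ (n - 0)"
    using gch_pos2[OF assms(1), of n n] assms(3) by simp
  show "0 \<le> 1 / 2 ^ n * ((real n + a) gchoose (n - j)) * ((real n + b) gchoose j) * (x - 1) ^ j * (x + 1) ^ (n - j)"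
    if j: "j \<in> {0..n}" for j
  proof -
    have "(real n + a) gchoose (n - j) > 0" by (rule gch_pos2) (use assms j in auto)
    moreover have "(real n + b) gchoose j > 0" by (rule gch_pos2) (use assms j in auto)
    ultimately show "0 \<le> 1 / 2 ^ n * ((real n + a) gchoose (n - j)) * ((real n + b) gchoose j) * (x - 1) ^ j * (x + 1) ^ (n - j)"
      using assms(3) by (intro mult_nonneg_nonneg) auto
  qed
qed

lemma jacobiP_left:
  assumes "a > -1" "b > -1" "x \<le> -1"
  shows "(-1)^n * jacobiP n a b x > 0"
  unfolding jacobiP_def sum_distrib_left
proof (rule sum_pos2[of _ n])
  show "finite {0..n}" by simp
  show "n \<in> {0..n}" by simp
  have e: "(-1::real)^n * (x-1)^j * (x+1)^(n-j) = (1-x)^j * (-1-x)^(n-j)" if "j \<le> n" for j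
  proof -
    have "(-1::real)^n = (-1)^j * (-1)^(n-j)" using that by (simp add: power_add[symmetric])
    then show ?thesis by (simp add: power_mult_distrib[symmetric] algebra_simps)
  qed
  have t: "(-1)^n * (1 / 2 ^ n * ((real n + a) gchoose (n - j)) * ((real n + b) gchoose j) * (x - 1) ^ j * (x + 1) ^ (n - j))
     = 1 / 2 ^ n * ((real n + a) gchoose (n - j)) * ((real n + b) gchoose j) * ((1-x)^j * (-1-x)^(n-j))" if "j \<le> n" for j
    using e[OF that] by (simp add: algebra_simps)
  show "0 < (-1)^n * (1 / 2 ^ n * ((real n + a) gchoose (n - n)) * ((real n + b) gchoose n) * (x - 1) ^ n * (x + 1) ^ (n - n))"
    unfolding t[OF order_refl] using gch_pos2[OF assms(2), of n n] assms(3) by simp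
  show "0 \<le> (-1)^n * (1 / 2 ^ n * ((real n + a) gchoose (n - j)) * ((real n + b) gchoose j) * (x - 1) ^ j * (x + 1) ^ (n - j))"
    if j: "j \<in> {0..n}" for j
  proof -
    have "(real n + a) gchoose (n - j) > 0" by (rule gch_pos2) (use assms j in auto)
    moreover have "(real n + b) gchoose j > 0" by (rule gch_pos2) (use assms j in auto)
    ultimately show "0 \<le> (-1)^n * (1 / 2 ^ n * ((real n + a) gchoose (n - j)) * ((real n + b) gchoose j) * (x - 1) ^ j * (x + 1) ^ (n - j))"
      unfolding t[of j, OF atLeastAtMost_iff[THEN iffD1, OF j, THEN conjunct2]] using assms(3) j by (intro mult_nonneg_nonneg) auto
  qed
qed

lemma jacobiP_poly: "\<exists>Q. (\<forall>x. poly Q x = jacobiP m p q x) \<and> degree Q \<le> m"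
proof (intro exI conjI allI)
  define Q where "Q = (\<Sum>j=0..m. smult (1 / 2 ^ m * ((real m + p) gchoose (m - j)) * ((real m + q) gchoose j)) ([:-1,1:]^j * [:1,1:]^(m-j)))"
  fix x
  show "poly Q x = jacobiP m p q x" unfolding Q_def jacobiP_def poly_sum
    by (simp add: algebra_simps)
next
  show "degree (\<Sum>j=0..m. smult (1 / 2 ^ m * ((real m + p) gchoose (m - j)) * ((real m + q) gchoose j)) ([:-1,1:]^j * [:1,1:]^(m-j))) \<le> m"
  proof (rule degree_sum_le)
    fix j assume j: "j \<in> {0..m}"
    have "degree (([:-1,1:]::real poly)^j * [:1,1:]^(m-j)) \<le> degree (([:-1,1:]::real poly)^j) + degree (([:1,1:]::real poly)^(m-j))"
      by (rule degree_mult_le)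
    also have "\<dots> \<le> 1 * j + 1 * (m-j)"
      by (intro add_mono order.trans[OF degree_power_le]) auto
    also have "\<dots> = m" using j by simp
    finally show "degree (smult (1 / 2 ^ m * ((real m + p) gchoose (m - j)) * ((real m + q) gchoose j)) (([:-1,1:]::real poly)^j * [:1,1:]^(m-j))) \<le> m"
      using degree_smult_le order.trans by blast
  qed simp
qed

lemma roots_dvd:
  fixes Q :: "real poly"
  assumes "finite S" "\<forall>s\<in>S. poly Q s = 0"
  shows "(\<Prod>s\<in>S. [:-s,1:]) dvd Q"
  using assms
proof (induction S arbitrary: Q rule: finite_induct)
  case empty
  then show ?case by simp
next
  case (insert s S)
  have "[:-s,1:] dvd Q" using insert.prems poly_eq_0_iff_dvd by blast
  then obtain R where R: "Q = [:-s,1:] * R" by (elim dvdE)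
  have "\<forall>s'\<in>S. poly R s' = 0"
  proof
    fix s' assume s': "s' \<in> S"
    then have "s' \<noteq> s" using insert.hyps by auto
    moreover have "poly Q s' = 0" using insert.prems s' by auto
    ultimately show "poly R s' = 0" unfolding R by simp
  qed
  then have "(\<Prod>s\<in>S. [:-s,1:]) dvd R" by (rule insert.IH)
  then show ?case unfolding R prod.insert[OF insert.hyps] by (rule mult_dvd_mono[OF dvd_refl])
qed

lemma poly_prod_repr:
  fixes Q :: "real poly" and t :: "nat \<Rightarrow> real"
  assumes "degree Q \<le> n" "Q \<noteq> 0" "inj_on t {1..n}" "\<forall>m\<in>{1..n}. poly Q (t m) = 0"
  shows "\<exists>c. \<forall>x. poly Q x = c * (\<Prod>m\<in>{1..n}. (x - t m))"
proof -
  define S where "S = t ` {1..n}"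
  have fS: "finite S" unfolding S_def by simp
  have cS: "card S = n" unfolding S_def using card_image[OF assms(3)] by simp
  have "(\<Prod>s\<in>S. [:-s,1:]) dvd Q" by (rule roots_dvd[OF fS]) (use assms(4) S_def in auto)
  then obtain R where R: "Q = (\<Prod>s\<in>S. [:-s,1:]) * R" by (elim dvdE)
  have P0: "(\<Prod>s\<in>S. [:-s,1:]) \<noteq> (0::real poly)" using fS by (simp add: prod_zero_iff)
  have R0: "R \<noteq> 0" using assms(2) R by auto
  have dP: "degree (\<Prod>s\<in>S. [:-s,1:]) = n"
    using degree_prod_eq_sum_degree[of S "\<lambda>s. [:-s,1:]::real poly"] cS by simp
  have "degree Q = n + degree R" unfolding R using degree_mult_eq[OF P0 R0] dP by simp
  then have "degree R = 0" using assms(1) by simp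
  then obtain c where c: "R = [:c:]" by (elim degree_eq_zeroE)
  have "poly Q x = c * (\<Prod>m\<in>{1..n}. (x - t m))" for x
  proof -
    have "poly Q x = (\<Prod>s\<in>S. (x - s)) * c" unfolding R c by (simp add: poly_prod)
    also have "(\<Prod>s\<in>S. (x - s)) = (\<Prod>m\<in>{1..n}. (x - t m))"
      unfolding S_def using prod.reindex[OF assms(3), of "\<lambda>s. x - s"] by (simp add: comp_def)
    finally show ?thesis by simp
  qed
  then show ?thesis by blast
qed

definition ttt :: "nat \<Rightarrow> (nat \<Rightarrow> real) \<Rightarrow> nat \<Rightarrow> real" where
  "ttt n t m = (if m = 0 then -1 else if m \<le> n then t m else 1)"

lemma zeros_in:
  assumes "a > -1" "b > -1" "{x. jacobiP n a b x = 0} = t ` {1..n}" "m \<in> {1..n}"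
  shows "-1 < t m" "t m < 1"
proof -
  have z: "jacobiP n a b (t m) = 0" using assms(3,4) by auto
  show "t m < 1" using jacobiP_right[OF assms(1,2), of "t m" n] z by force
  show "-1 < t m" using jacobiP_left[OF assms(1,2), of "t m" n] z by force
qed

lemma jacobiP_sign:
  assumes "a > -1" "b > -1" "strict_mono_on {1..n} t" "{x. jacobiP n a b x = 0} = t ` {1..n}"
    and "m \<le> n" "ttt n t m < x" "x < ttt n t (Suc m)"
  shows "(-1)^(n-m) * jacobiP n a b x > 0"
proof -
  obtain Q where Q: "\<forall>x. poly Q x = jacobiP n a b x" "degree Q \<le> n" using jacobiP_poly by blast
  have Q0: "Q \<noteq> 0" using Q(1) jacobiP_right[OF assms(1,2), of 1 n] by auto
  have inj: "inj_on t {1..n}" by (rule strict_mono_on_imp_inj_on[OF assms(3)])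
  have roots: "\<forall>m\<in>{1..n}. poly Q (t m) = 0" using Q(1) assms(4) by auto
  obtain c where c: "\<forall>x. poly Q x = c * (\<Prod>m\<in>{1..n}. (x - t m))"
    using poly_prod_repr[OF Q(2) Q0 inj roots] by blast
  have tin: "-1 < t j" "t j < 1" if "j \<in> {1..n}" for j using zeros_in[OF assms(1,2,4) that] by auto
  have cpos: "c > 0"
  proof -
    have "jacobiP n a b 1 > 0" using jacobiP_right[OF assms(1,2)] by simp
    moreover have "(\<Prod>m\<in>{1..n}. (1 - t m)) > 0" by (rule prod_pos) (use tin in force)
    moreover have "jacobiP n a b 1 = c * (\<Prod>m\<in>{1..n}. (1 - t m))" using c Q(1) by metis
    ultimately show ?thesis using zero_less_mult_pos2 by metis
  qed
  have split: "{1..n} = {1..m} \<union> {Suc m..n}" using assms(5) by auto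
  have P1: "(\<Prod>j\<in>{1..m}. (x - t j)) > 0"
  proof (rule prod_pos)
    fix j assume j: "j \<in> {1..m}"
    then have "m \<noteq> 0" by auto
    then have "ttt n t m = t m" using assms(5) unfolding ttt_def by auto
    moreover have "t j \<le> t m" by (rule strict_mono_on_leD[OF assms(3)]) (use j assms(5) in auto)
    ultimately show "0 < x - t j" using assms(6) by simp
  qed
  have P2: "(\<Prod>j\<in>{Suc m..n}. (t j - x)) > 0"
  proof (rule prod_pos)
    fix j assume j: "j \<in> {Suc m..n}"
    then have "ttt n t (Suc m) = t (Suc m)" unfolding ttt_def by auto
    moreover have "t (Suc m) \<le> t j" by (rule strict_mono_on_leD[OF assms(3)]) (use j assms(5) in auto)
    ultimately show "0 < t j - x" using assms(7) by simp
  qed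
  have P2': "(-1)^(n-m) * (\<Prod>j\<in>{Suc m..n}. (x - t j)) = (\<Prod>j\<in>{Suc m..n}. (t j - x))"
  proof -
    have "(\<Prod>j\<in>{Suc m..n}. (t j - x)) = (\<Prod>j\<in>{Suc m..n}. (-1) * (x - t j))" by simp
    also have "\<dots> = (-1)^(card {Suc m..n}) * (\<Prod>j\<in>{Suc m..n}. (x - t j))"
      by (simp only: prod.distrib prod_constant)
    finally show ?thesis by simp
  qed
  have "(-1)^(n-m) * jacobiP n a b x = c * ((\<Prod>j\<in>{1..m}. (x - t j)) * ((-1)^(n-m) * (\<Prod>j\<in>{Suc m..n}. (x - t j))))"
  proof -
    have "jacobiP n a b x = c * (\<Prod>j\<in>{1..n}. (x - t j))" using c Q(1) by metis
    also have "(\<Prod>j\<in>{1..n}. (x - t j)) = (\<Prod>j\<in>{1..m}. (x - t j)) * (\<Prod>j\<in>{Suc m..n}. (x - t j))"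
      unfolding split by (rule prod.union_disjoint) auto
    finally show ?thesis by (simp add: algebra_simps)
  qed
  also have "\<dots> > 0" unfolding P2' using cpos P1 P2 by simp
  finally show ?thesis .
qed
lemma piecewise_integral:
  fixes y :: "nat \<Rightarrow> real" and \<sigma> :: "nat \<Rightarrow> real" and G g f :: "real \<Rightarrow> real"
  shows "(\<And>j. j < N \<Longrightarrow> y j \<le> y (Suc j)) \<Longrightarrow> continuous_on {y 0..y N} G \<Longrightarrow>
    (\<And>x. y 0 < x \<Longrightarrow> x < y N \<Longrightarrow> (G has_real_derivative g x) (at x)) \<Longrightarrow>
    (\<And>j x. j < N \<Longrightarrow> y j < x \<Longrightarrow> x < y (Suc j) \<Longrightarrow> f x = \<sigma> j * g x) \<Longrightarrow>
    (f has_integral (\<Sum>j<N. \<sigma> j * (G (y (Suc j)) - G (y j)))) {y 0..y N}"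
proof (induction N)
  case 0
  then show ?case using has_integral_refl(2)[of f "y 0"] by simp
next
  case (Suc N)
  note P1 = Suc.prems(1)
  have mono: "y 0 \<le> y N"
  proof -
    have "y 0 \<le> y k" if "k \<le> N" for k using that
    proof (induction k)
      case (Suc k)
      then show ?case using P1[of k] by force
    qed simp
    then show ?thesis by simp
  qed
  have yN: "y N \<le> y (Suc N)" using Suc.prems(1) by simp
  have IH: "(f has_integral (\<Sum>j<N. \<sigma> j * (G (y (Suc j)) - G (y j)))) {y 0..y N}"
  proof (rule Suc.IH)
    show "y j \<le> y (Suc j)" if "j < N" for j using Suc.prems(1) that by simp
    show "continuous_on {y 0..y N} G" using Suc.prems(2) by (rule continuous_on_subset) (use yN in auto)
    show "(G has_real_derivative g x) (at x)" if "y 0 < x" "x < y N" for x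
      using Suc.prems(3) that yN by simp
    show "f x = \<sigma> j * g x" if "j < N" "y j < x" "x < y (Suc j)" for j x
      using Suc.prems(4) that by simp
  qed
  have last0: "((\<lambda>x. \<sigma> N * g x) has_integral (\<sigma> N * G (y (Suc N)) - \<sigma> N * G (y N))) {y N..y (Suc N)}"
  proof (rule fundamental_theorem_of_calculus_interior[OF yN, of "\<lambda>x. \<sigma> N * G x"])
    show "continuous_on {y N..y (Suc N)} (\<lambda>x. \<sigma> N * G x)"
      by (intro continuous_intros, rule continuous_on_subset[OF Suc.prems(2)]) (use mono in auto)
    fix x assume "x \<in> {y N<..<y (Suc N)}"
    then have x: "y N < x" "x < y (Suc N)" by auto
    have "((\<lambda>x. \<sigma> N * G x) has_real_derivative \<sigma> N * g x) (at x)"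
      by (intro DERIV_cmult Suc.prems(3)) (use x mono in auto)
    then show "((\<lambda>x. \<sigma> N * G x) has_vector_derivative \<sigma> N * g x) (at x)"
      by (simp add: has_real_derivative_iff_has_vector_derivative)
  qed
  have last: "(f has_integral (\<sigma> N * (G (y (Suc N)) - G (y N)))) {y N..y (Suc N)}"
  proof -
    have "((\<lambda>x. \<sigma> N * g x) has_integral (\<sigma> N * (G (y (Suc N)) - G (y N)))) (cbox (y N) (y (Suc N)))"
      using last0 by (simp add: right_diff_distrib)
    then have "(f has_integral (\<sigma> N * (G (y (Suc N)) - G (y N)))) (cbox (y N) (y (Suc N)))"
      by (rule has_integral_spike_interior) (use Suc.prems(4)[of N] in auto)
    then show ?thesis by simp
  qed
  show ?case
    using has_integral_combine[OF mono yN IH last] by (simp add: add.commute)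
qed

lemma telescope:
  fixes \<sigma> :: "nat \<Rightarrow> real"
  shows "(\<Sum>j<Suc N. \<sigma> j * (G (y (Suc j)) - G (y j))) =
    \<sigma> N * G (y (Suc N)) - \<sigma> 0 * G (y 0) + (\<Sum>m\<in>{1..N}. (\<sigma> (m-1) - \<sigma> m) * G (y m))"
proof (induction N)
  case 0
  then show ?case by (simp add: algebra_simps)
next
  case (Suc N)
  have "(\<Sum>m\<in>{1..Suc N}. (\<sigma> (m-1) - \<sigma> m) * G (y m)) = (\<Sum>m\<in>{1..N}. (\<sigma> (m-1) - \<sigma> m) * G (y m)) + (\<sigma> N - \<sigma> (Suc N)) * G (y (Suc N))"
    by simp
  then show ?case using Suc by (simp add: algebra_simps)
qed

lemma neg1_pow: "m \<le> n \<Longrightarrow> (-1::real)^(m+n) = (-1)^(n-m)"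
proof -
  assume "m \<le> n"
  then obtain d where "n = m + d" using le_Suc_ex by blast
  then show ?thesis by (simp add: power_add power_mult[symmetric] mult_2[symmetric])
qed

lemma neg1_cases: "(-1::real)^k = 1 \<or> (-1::real)^k = -1"
  by (cases "even k") auto

lemma jA: "jacA n i a b x = 2 * Sf n a b i x"
  unfolding jacA_def Sf_def Phi_def sum_distrib_left
  by (rule sum.cong[OF refl]) (simp add: algebra_simps)

lemma Sf_zero: "Sf n a b i 0 = Phi n a b i 0"
proof -
  have "Sf n a b i 0 = (\<Sum>k=0..i. if k = i then Phi n a b i 0 else 0)"
    unfolding Sf_def by (rule sum.cong[OF refl]) auto
  also have "\<dots> = Phi n a b i 0" by simp
  finally show ?thesis .
qed

lemma ttt_mono:
  assumes "a > -1" "b > -1" "strict_mono_on {1..n} t" "{x. jacobiP n a b x = 0} = t ` {1..n}"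
    and "k \<le> l" "l \<le> Suc n"
  shows "ttt n t k \<le> ttt n t l"
proof -
  have tin: "-1 < t j" "t j < 1" if "j \<in> {1..n}" for j using zeros_in[OF assms(1,2,4) that] by auto
  show ?thesis
  proof (cases "k = 0")
    case True
    then show ?thesis unfolding ttt_def using tin[of l] by force
  next
    case k: False
    show ?thesis
    proof (cases "l \<le> n")
      case True
      then show ?thesis unfolding ttt_def using k assms(5) strict_mono_on_leD[OF assms(3), of k l] by auto
    next
      case False
      then show ?thesis unfolding ttt_def using k tin[of k] by force
    qed
  qed
qed

lemma ttt_range:
  assumes "a > -1" "b > -1" "{x. jacobiP n a b x = 0} = t ` {1..n}"
  shows "-1 \<le> ttt n t m" "ttt n t m \<le> 1"
  using zeros_in[OF assms] unfolding ttt_def by (auto simp: less_imp_le)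

lemma jf_abs:
  assumes "1 \<le> n" "a > -1" "b > -1" "strict_mono_on {1..n} t" "{x. jacobiP n a b x = 0} = t ` {1..n}"
    and "m \<le> n" "ttt n t m < x" "x < ttt n t (Suc m)"
  shows "\<bar>jacobi_fun n a b x\<bar> = (-1)^(n-m) * jacobi_fun n a b x"
proof -
  have x: "-1 < x" "x < 1" using ttt_range[OF assms(2,3,5), of m] ttt_range[OF assms(2,3,5), of "Suc m"] assms(7,8) by linarith+
  define E where "E = ((2 * real n + a + b + 1) * Gamma (real n + a + b + 1) * fact n
       / (2 powr (a + b + 1) * Gamma (real n + a + 1) * Gamma (real n + b + 1)))
     * (1 - x) powr a * (1 + x) powr b"
  have Ep: "E > 0" unfolding E_def using assms(1,2,3) x
    by (intro mult_pos_pos divide_pos_pos) auto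
  have jf: "jacobi_fun n a b x = E * jacobiP n a b x" unfolding jacobi_fun_def E_def by simp
  have s: "(-1)^(n-m) * jacobiP n a b x > 0" by (rule jacobiP_sign) (use assms in auto)
  have "\<bar>jacobiP n a b x\<bar> = (-1)^(n-m) * jacobiP n a b x"
    using neg1_cases[of "n-m"] s by auto
  then show ?thesis unfolding jf using Ep by (simp add: abs_mult)
qed

theorem theorem4p5:
  fixes n i n0 :: nat and a b :: real and t :: "nat \<Rightarrow> real"
  assumes "n \<ge> 1" and "i \<le> n - 1" and "a > -1" and "b > -1"
    and "strict_mono_on {1..n} t"
    and "{x. jacobiP n a b x = 0} = t ` {1..n}"
    and "n0 \<le> n"
    and "n0 = 0 \<or> t n0 \<le> 0"
    and "n0 = n \<or> 0 < t (n0 + 1)"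
  shows "(even i \<longrightarrow>
            ((\<lambda>x. \<bar>x\<bar> ^ i / fact i * \<bar>jacobi_fun n a b x\<bar>) has_integral
               (\<Sum>m=1..n. (-1) ^ (m + n) * jacA n i a b (t m))) {-1..1})
       \<and> (odd i \<longrightarrow>
            ((\<lambda>x. \<bar>x\<bar> ^ i / fact i * \<bar>jacobi_fun n a b x\<bar>) has_integral
               ((\<Sum>m=1..n0. (-1) ^ (m + n + 1) * jacA n i a b (t m))
                + (-1) ^ (n0 + n) * (2 ^ (i + 2) * Gamma (real n + a + b + 1)
                     / Gamma (real n + real i + a + b + 2))
                    * jacobi_fun (n - 1 - i) (a + 1 + real i) (b + 1 + real i) 0
                + (\<Sum>m=n0+1..n. (-1) ^ (m + n) * jacA n i a b (t m)))) {-1..1})"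
proof -
  have iN: "i < n" using assms(1,2) by linarith
  define g where "g x = x^i/fact i * jacobi_fun n a b x" for x
  define G where "G x = - Sf n a b i x" for x
  define f where "f x = \<bar>x\<bar> ^ i / fact i * \<bar>jacobi_fun n a b x\<bar>" for x
  have Gd: "(G has_real_derivative g x) (at x)" if "-1 < x" "x < 1" for x
    unfolding G_def[abs_def] g_def using DERIV_minus[OF Sf_deriv[OF that assms(3,4) iN]] by simp
  have Gc: "continuous_on {-1..1} G" unfolding G_def[abs_def]
    by (intro continuous_on_minus Sf_cont assms(3,4))
  have Ge: "G 1 = 0" "G (-1) = 0" unfolding G_def using Sf_end[OF assms(3,4)] by simp_all
  have absj: "\<bar>jacobi_fun n a b x\<bar> = (-1)^(n-m) * jacobi_fun n a b x"
    if "m \<le> n" "ttt n t m < x" "x < ttt n t (Suc m)" for m x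
    by (rule jf_abs[OF assms(1,3,4,5,6) that])
  have tmono: "ttt n t k \<le> ttt n t l" if "k \<le> l" "l \<le> Suc n" for k l
    by (rule ttt_mono[OF assms(3-6) that])
  have t0: "ttt n t 0 = -1" "ttt n t (Suc n) = 1" unfolding ttt_def by auto
  have tm: "ttt n t m = t m" if "1 \<le> m" "m \<le> n" for m using that unfolding ttt_def by auto
  have Gt: "G (t m) = - Sf n a b i (t m)" for m unfolding G_def ..
  have even_part: "(f has_integral (\<Sum>m=1..n. (-1) ^ (m + n) * jacA n i a b (t m))) {-1..1}" if ev: "even i"
  proof -
    define \<sigma> where "\<sigma> m = (-1::real)^(n-m)" for m
    have I: "(f has_integral (\<Sum>j<Suc n. \<sigma> j * (G (ttt n t (Suc j)) - G (ttt n t j)))) {ttt n t 0..ttt n t (Suc n)}"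
    proof (rule piecewise_integral)
      show "ttt n t j \<le> ttt n t (Suc j)" if "j < Suc n" for j using tmono that by simp
      show "continuous_on {ttt n t 0..ttt n t (Suc n)} G" unfolding t0 by (rule Gc)
      show "(G has_real_derivative g x) (at x)" if "ttt n t 0 < x" "x < ttt n t (Suc n)" for x
        using Gd that unfolding t0 by simp
      show "f x = \<sigma> j * g x" if "j < Suc n" "ttt n t j < x" "x < ttt n t (Suc j)" for j x
      proof -
        have "\<bar>x\<bar>^i = x^i" using ev by (simp add: power_even_abs)
        then show ?thesis unfolding f_def g_def \<sigma>_def using absj[of j x] that by simp
      qed
    qed
    have "(\<Sum>j<Suc n. \<sigma> j * (G (ttt n t (Suc j)) - G (ttt n t j)))
        = \<sigma> n * G (ttt n t (Suc n)) - \<sigma> 0 * G (ttt n t 0) + (\<Sum>m\<in>{1..n}. (\<sigma> (m-1) - \<sigma> m) * G (ttt n t m))"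
      by (rule telescope)
    also have "\<dots> = (\<Sum>m=1..n. (-1) ^ (m + n) * jacA n i a b (t m))"
    proof -
      have "(\<sigma> (m-1) - \<sigma> m) * G (ttt n t m) = (-1)^(m+n) * jacA n i a b (t m)" if "m \<in> {1..n}" for m
      proof -
        have e: "n - (m-1) = Suc (n-m)" using that by auto
        have tmm: "ttt n t m = t m" using that by (intro tm) auto
        show ?thesis unfolding \<sigma>_def e tmm Gt jA using that by (simp add: neg1_pow algebra_simps)
      qed
      then show ?thesis unfolding t0 Ge by simp
    qed
    finally show ?thesis using I unfolding t0 by simp
  qed
  have odd_part: "(f has_integral ((\<Sum>m=1..n0. (-1) ^ (m + n + 1) * jacA n i a b (t m))
                + (-1) ^ (n0 + n) * (2 ^ (i + 2) * Gamma (real n + a + b + 1)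
                     / Gamma (real n + real i + a + b + 2))
                    * jacobi_fun (n - 1 - i) (a + 1 + real i) (b + 1 + real i) 0
                + (\<Sum>m=n0+1..n. (-1) ^ (m + n) * jacA n i a b (t m)))) {-1..1}" if od: "odd i"
  proof -
    define y where "y j = (if j \<le> n0 then ttt n t j else if j = Suc n0 then 0 else ttt n t (j-1))" for j
    define \<sigma> where "\<sigma> j = (if j \<le> n0 then - ((-1::real)^(n-j)) else (-1)^(n-(j-1)))" for j
    have y0: "y 0 = -1" unfolding y_def t0 by simp
    have yN: "y (Suc (Suc n)) = 1" unfolding y_def using assms(7) t0 by auto
    have tn0: "ttt n t n0 \<le> 0" using assms(7,8) unfolding ttt_def by auto
    have tn1: "0 < ttt n t (Suc n0)" using assms(7,9) unfolding ttt_def by auto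
    have oddneg: "\<bar>x\<bar>^i = - (x^i)" if "x < 0" for x :: real
    proof -
      have "\<bar>x\<bar>^i = (-x)^i" using that by simp
      also have "\<dots> = - (x^i)" using od by (simp add: power_minus_odd)
      finally show ?thesis .
    qed
    have oddpos: "\<bar>x\<bar>^i = x^i" if "x > 0" for x :: real using that by simp
    have I: "(f has_integral (\<Sum>j<Suc (Suc n). \<sigma> j * (G (y (Suc j)) - G (y j)))) {y 0..y (Suc (Suc n))}"
    proof (rule piecewise_integral)
      show "y j \<le> y (Suc j)" if "j < Suc (Suc n)" for j
      proof -
        consider "j < n0" | "j = n0" | "j = Suc n0" | "Suc n0 < j" by linarith
        then show ?thesis
        proof cases
          case 1
          then show ?thesis unfolding y_def using tmono[of j "Suc j"] assms(7) by auto
        next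
          case 2
          then show ?thesis unfolding y_def using tn0 by auto
        next
          case 3
          then show ?thesis unfolding y_def using tn1 by auto
        next
          case 4
          then show ?thesis unfolding y_def using tmono[of "j-1" j] that by auto
        qed
      qed
      show "continuous_on {y 0..y (Suc (Suc n))} G" unfolding y0 yN by (rule Gc)
      show "(G has_real_derivative g x) (at x)" if "y 0 < x" "x < y (Suc (Suc n))" for x
        using Gd that unfolding y0 yN by simp
      show "f x = \<sigma> j * g x" if j: "j < Suc (Suc n)" "y j < x" "x < y (Suc j)" for j x
      proof -
        consider "j < n0" | "j = n0" | "j = Suc n0" | "Suc n0 < j" by linarith
        then show ?thesis
        proof cases
          case 1
          then have a1: "ttt n t j < x" "x < ttt n t (Suc j)" using j unfolding y_def by auto
          have "ttt n t (Suc j) \<le> ttt n t n0" using 1 assms(7) by (intro tmono) auto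
          then have "x < 0" using a1 tn0 by linarith
          then show ?thesis unfolding f_def g_def \<sigma>_def using oddneg[of x] absj[of j x] a1 1 assms(7) by simp
        next
          case 2
          then have a1: "ttt n t n0 < x" "x < 0" using j unfolding y_def by auto
          then have a2: "x < ttt n t (Suc n0)" using tn1 by linarith
          show ?thesis unfolding f_def g_def \<sigma>_def using oddneg[of x] absj[of n0 x] a1 a2 2 assms(7) by simp
        next
          case 3
          then have a1: "0 < x" "x < ttt n t (Suc n0)" using j unfolding y_def by auto
          then have a2: "ttt n t n0 < x" using tn0 by linarith
          show ?thesis unfolding f_def g_def \<sigma>_def using oddpos[of x] absj[of n0 x] a1 a2 3 assms(7) by simp
        next
          case 4
          then have a1: "ttt n t (j-1) < x" "x < ttt n t (Suc (j-1))" using j unfolding y_def by auto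
          have "ttt n t (Suc n0) \<le> ttt n t (j-1)" using 4 j by (intro tmono) auto
          then have a2: "0 < x" using a1 tn1 by linarith
          show ?thesis unfolding f_def g_def \<sigma>_def using oddpos[of x] absj[of "j-1" x] a1 a2 4 j by simp
        qed
      qed
    qed
    define T where "T m = (\<sigma> (m-1) - \<sigma> m) * G (y m)" for m
    have "(\<Sum>j<Suc (Suc n). \<sigma> j * (G (y (Suc j)) - G (y j)))
        = \<sigma> (Suc n) * G (y (Suc (Suc n))) - \<sigma> 0 * G (y 0) + (\<Sum>m\<in>{1..Suc n}. T m)"
      unfolding T_def by (rule telescope)
    also have "\<dots> = (\<Sum>m\<in>{1..Suc n}. T m)" unfolding y0 yN Ge by simp
    also have "\<dots> = (\<Sum>m\<in>{1..n0}. T m) + (T (Suc n0) + (\<Sum>m\<in>{Suc n0..n}. T (Suc m)))"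
    proof -
      have "{1..Suc n} = {1..n0} \<union> {Suc n0..Suc n}" using assms(7) by auto
      then have "(\<Sum>m\<in>{1..Suc n}. T m) = (\<Sum>m\<in>{1..n0}. T m) + (\<Sum>m\<in>{Suc n0..Suc n}. T m)"
        by (simp add: sum.union_disjoint)
      also have "(\<Sum>m\<in>{Suc n0..Suc n}. T m) = T (Suc n0) + (\<Sum>m\<in>{Suc (Suc n0)..Suc n}. T m)"
        by (rule sum.atLeast_Suc_atMost) (use assms(7) in simp)
      also have "(\<Sum>m\<in>{Suc (Suc n0)..Suc n}. T m) = (\<Sum>m\<in>{Suc n0..n}. T (Suc m))"
        by (rule sum.shift_bounds_cl_Suc_ivl)
      finally show ?thesis .
    qed
    also have "\<dots> = (\<Sum>m=1..n0. (-1) ^ (m + n + 1) * jacA n i a b (t m))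
                + (-1) ^ (n0 + n) * (2 ^ (i + 2) * Gamma (real n + a + b + 1)
                     / Gamma (real n + real i + a + b + 2))
                    * jacobi_fun (n - 1 - i) (a + 1 + real i) (b + 1 + real i) 0
                + (\<Sum>m=n0+1..n. (-1) ^ (m + n) * jacA n i a b (t m))"
    proof -
      have s1: "(\<Sum>m\<in>{1..n0}. T m) = (\<Sum>m=1..n0. (-1) ^ (m + n + 1) * jacA n i a b (t m))"
      proof (rule sum.cong[OF refl])
        fix m assume m: "m \<in> {1..n0}"
        have e: "n - (m-1) = Suc (n-m)" using m assms(7) by auto
        have ym: "y m = t m" unfolding y_def using m assms(7) tm[of m] by auto
        have sm: "\<sigma> (m-1) = - ((-1)^(n-(m-1)))" "\<sigma> m = - ((-1)^(n-m))" using m unfolding \<sigma>_def by auto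
        show "T m = (-1) ^ (m + n + 1) * jacA n i a b (t m)"
          unfolding T_def sm ym Gt jA e using m assms(7)
          by (simp add: neg1_pow algebra_simps)
      qed
      have s2: "T (Suc n0) = (-1) ^ (n0 + n) * (2 ^ (i + 2) * Gamma (real n + a + b + 1)
                     / Gamma (real n + real i + a + b + 2))
                    * jacobi_fun (n - 1 - i) (a + 1 + real i) (b + 1 + real i) 0"
      proof -
        have ys: "y (Suc n0) = 0" unfolding y_def by simp
        have sm: "\<sigma> (Suc n0 - 1) = - ((-1)^(n-n0))" "\<sigma> (Suc n0) = (-1)^(n-n0)" unfolding \<sigma>_def by auto
        have np: "(-1::real)^(n0+n) = (-1)^(n-n0)" using assms(7) by (rule neg1_pow)
        show ?thesis unfolding T_def sm ys G_def Sf_zero Phi_def np using assms(7)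
          by (simp add: neg1_pow algebra_simps)
      qed
      have s3: "(\<Sum>m\<in>{Suc n0..n}. T (Suc m)) = (\<Sum>m=n0+1..n. (-1) ^ (m + n) * jacA n i a b (t m))"
      proof (rule sum.cong)
        show "{Suc n0..n} = {n0+1..n}" by simp
        fix m assume m: "m \<in> {n0+1..n}"
        have e: "n - (m-1) = Suc (n-m)" using m by auto
        have ym: "y (Suc m) = t m" unfolding y_def using m tm[of m] by auto
        have sm: "\<sigma> (Suc m - 1) = (-1)^(n-(m-1))" "\<sigma> (Suc m) = (-1)^(n-m)" using m unfolding \<sigma>_def by auto
        show "T (Suc m) = (-1) ^ (m + n) * jacA n i a b (t m)"
          unfolding T_def sm ym Gt jA e using m
          by (simp add: neg1_pow algebra_simps)
      qed
      show ?thesis unfolding s1 s2 s3 by simp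
    qed
    finally show ?thesis using I unfolding y0 yN by simp
  qed
  show ?thesis using even_part odd_part unfolding f_def by blast
qed

end
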